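(* Let $f:[0,\infty)\to[0,1]$ be a $C^1$, non-decreasing function with $f(0)=0$ and $f'(0)\ge\lambda$ for some fixed $\lambda>0$. Then for every $\epsilon>0$ there exists a piecewise linear function $\widetilde f$ consisting of only finitely many line segments such that $\frac{|f(t)-\widetilde f(t)|}{f(t)}\le\epsilon$ for all $t>0$. *)

theory Defs
  imports "HOL-Analysis.Analysis"
begin

definition pl_piece :: "real list \<Rightarrow> nat \<Rightarrow> real set" where
  "pl_piece xs i = (if Suc i < length xs then {xs ! i .. xs ! Suc i} else {xs ! i ..})"

definition piecewise_linear_nonneg :: "(real \<Rightarrow> real) \<Rightarrow> bool" where
  "piecewise_linear_nonneg g \<longleftrightarrow>
     continuous_on {0..} g \<and>
     (\<exists>xs :: real list. xs \<noteq> [] \<and> hd xs = 0 \<and> sorted_wrt (<) xs \<and>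
        (\<forall>i < length xs. \<exists>a b. \<forall>t \<in> pl_piece xs i. g t = a * t + b))"

end

theory Submission
  imports Defs
begin

lemma pl_cont:
  assumes aff: "\<forall>i<length xs. \<exists>a b. \<forall>t\<in>pl_piece xs i. g t = a*t+b"
    and cov: "{0..} \<subseteq> (\<Union>i\<in>{..<length xs}. pl_piece xs i)"
  shows "continuous_on {0..} g"
proof -
  have "continuous_on (\<Union>i\<in>{..<length xs}. pl_piece xs i) g"
  proof (rule continuous_on_closed_Union)
    fix i assume i: "i \<in> {..<length xs}"
    have "\<exists>a b. \<forall>t\<in>pl_piece xs i. g t = a*t+b" using aff i by simp
    then obtain a b where ab: "\<forall>t\<in>pl_piece xs i. g t = a*t+b" by blast
    show "closed (pl_piece xs i)" unfolding pl_piece_def by auto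
    have "continuous_on (pl_piece xs i) (\<lambda>t. a*t+b)" by (intro continuous_intros)
    then show "continuous_on (pl_piece xs i) g"
      by (rule continuous_on_eq) (use ab in auto)
  qed auto
  then show ?thesis using cov continuous_on_subset by blast
qed

theorem theorem3:
  fixes f f' :: "real \<Rightarrow> real" and lam eps :: real
  assumes deriv: "\<And>t. t \<ge> 0 \<Longrightarrow> (f has_real_derivative f' t) (at t within {0..})"
    and cont_deriv: "continuous_on {0..} f'"
    and mono: "mono_on {0..} f"
    and range: "f ` {0..} \<subseteq> {0..1}"
    and f0: "f 0 = 0"
    and lam_pos: "lam > 0" and fd0: "f' 0 \<ge> lam"
    and eps_pos: "eps > 0"
  shows "\<exists>g. piecewise_linear_nonneg g \<and> (\<forall>t > 0. \<bar>f t - g t\<bar> / f t \<le> eps)"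
proof -
  have fcont: "continuous_on {0..} f"
    by (rule DERIV_continuous_on) (use deriv in auto)
  have mf: "\<And>r s. 0 \<le> r \<Longrightarrow> r \<le> s \<Longrightarrow> f r \<le> f s"
    using mono by (auto intro: mono_onD)
  define D where "D = f' 0"
  have Dpos: "D > 0" using fd0 lam_pos D_def by simp
  define \<eta> where "\<eta> = min (1/2) (eps/4)"
  have eta: "\<eta> > 0" "\<eta> \<le> 1/2" "\<eta> \<le> eps/4" using eps_pos by (auto simp: \<eta>_def)
  have "((\<lambda>y. (f y - f 0) / (y - 0)) \<longlongrightarrow> D) (at 0 within {0..})"
    using deriv[of 0] unfolding D_def has_field_derivative_iff by simp
  then have "eventually (\<lambda>y. dist ((f y - f 0) / (y - 0)) D < \<eta> * D) (at 0 within {0..})"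
    using eta Dpos by (auto simp: tendsto_iff)
  then obtain d where d: "d > 0" and dd: "\<And>y. y \<in> {0..} \<Longrightarrow> y \<noteq> 0 \<Longrightarrow> dist y 0 < d \<Longrightarrow>
      dist ((f y - f 0) / (y - 0)) D < \<eta> * D"
    unfolding eventually_at by blast
  define a where "a = d/2"
  have apos: "a > 0" using d a_def by simp
  have near: "\<bar>f t - D*t\<bar> \<le> \<eta>*D*t" if "0 < t" "t \<le> a" for t
  proof -
    have "\<bar>f t / t - D\<bar> < \<eta> * D" using dd[of t] that a_def d f0 by (auto simp: dist_real_def)
    then have "\<bar>(f t - D*t) / t\<bar> < \<eta> * D" using that by (simp add: field_simps)
    then show ?thesis using that by (simp add: abs_div pos_divide_less_eq)
  qed
  have fpos_small: "f t \<ge> (1-\<eta>)*D*t" if "0 < t" "t \<le> a" for t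
    using near[OF that] by (auto simp: algebra_simps abs_le_iff)
  have fa_pos: "f a > 0"
  proof -
    have "(1-\<eta>)*D*a > 0" using eta Dpos apos by simp
    then show ?thesis using fpos_small[of a] apos by simp
  qed
  define e where "e = eps * f a"
  have epos: "e > 0" using eps_pos fa_pos e_def by simp
  define L where "L = Sup (f ` {0..})"
  have bdd: "bdd_above (f ` {0..})" using range by (auto intro!: bdd_aboveI[where M=1])
  have fL: "\<And>t. t \<ge> 0 \<Longrightarrow> f t \<le> L" unfolding L_def by (rule cSup_upper) (use bdd in auto)
  have "L - e < L" using epos by simp
  then obtain s where s: "s \<ge> 0" "f s > L - e"
    unfolding L_def by (subst (asm) less_cSup_iff) (use bdd in auto)
  define b where "b = max s (a+1)"
  have ab: "a < b" using b_def by simp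
  have fb: "f b > L - e" using s mf[of s b] b_def by simp
  have "uniformly_continuous_on {a..b} f"
    by (rule compact_uniformly_continuous) (use fcont apos in \<open>auto intro: continuous_on_subset\<close>)
  then obtain \<delta> where dpos: "\<delta> > 0" and uc: "\<And>x y. x \<in> {a..b} \<Longrightarrow> y \<in> {a..b} \<Longrightarrow> dist y x < \<delta> \<Longrightarrow>
      dist (f y) (f x) < e"
    unfolding uniformly_continuous_on_def using epos by metis
  define N where "N = nat \<lceil>(b-a)/\<delta>\<rceil> + 1"
  have Npos: "N > 0" using N_def by simp
  have NN: "real N > (b-a)/\<delta>" unfolding N_def by linarith
  define h where "h = (b-a)/N"
  have hpos: "h > 0" using ab Npos h_def by simp
  have hd: "h < \<delta>" using NN dpos Npos ab unfolding h_def by (simp add: field_simps)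
  define x where "x k = a + real k * h" for k
  have xN: "x N = b" using Npos unfolding x_def h_def by simp
  have xmono: "x i \<le> x j" if "i \<le> j" for i j using that hpos unfolding x_def
    by (simp add: mult_right_mono)
  have xin: "x k \<in> {a..b}" if "k \<le> N" for k
    using xmono[of 0 k] xmono[of k N] that xN by (auto simp: x_def)
  have xstep: "f (x (Suc k)) - f (x k) < e" if "k < N" for k
  proof -
    have "dist (f (x (Suc k))) (f (x k)) < e"
    proof (rule uc)
      show "x k \<in> {a..b}" using xin that by simp
      show "x (Suc k) \<in> {a..b}" using xin that by simp
      have "x (Suc k) - x k = h" unfolding x_def by (simp add: algebra_simps)
      then show "dist (x (Suc k)) (x k) < \<delta>" using hpos hd by (simp add: dist_real_def)
    qed
    then show ?thesis by (simp add: dist_real_def)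
  qed
  define g where "g t = (if t \<le> a then f a / a * t else if t < b then
      (let k = nat \<lfloor>(t-a)/h\<rfloor> in f (x k) + (t - x k)/h * (f (x (Suc k)) - f (x k))) else f b)" for t
  have idx: "real (nat \<lfloor>(t-a)/h\<rfloor>) \<le> (t-a)/h \<and> (t-a)/h < real (nat \<lfloor>(t-a)/h\<rfloor>) + 1
      \<and> nat \<lfloor>(t-a)/h\<rfloor> < N \<and> x (nat \<lfloor>(t-a)/h\<rfloor>) \<le> t \<and> t < x (Suc (nat \<lfloor>(t-a)/h\<rfloor>))"
    if "a < t" "t < b" for t
  proof -
    define j where "j = nat \<lfloor>(t-a)/h\<rfloor>"
    have q: "(t-a)/h \<ge> 0" using that hpos by simp
    have j1: "real j \<le> (t-a)/h" using q j_def by linarith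
    have j2: "(t-a)/h < real j + 1" using q j_def by linarith
    have "(t-a)/h < (b-a)/h" using that hpos by (simp add: divide_strict_right_mono)
    also have "(b-a)/h = N" using hpos Npos ab unfolding h_def by simp
    finally have j3: "j < N" using j1 by linarith
    have "x j \<le> t" using j1 hpos unfolding x_def by (simp add: field_simps)
    moreover have "t < x (Suc j)" using j2 hpos unfolding x_def by (simp add: field_simps)
    ultimately show ?thesis using j1 j2 j3 j_def by simp
  qed
  have err: "\<bar>f t - g t\<bar> / f t \<le> eps" if "t > 0" for t
  proof -
    have main: "\<bar>f t - g t\<bar> \<le> eps * f t \<and> f t > 0"
    proof (cases "t \<le> a")
      case True
      have gt: "g t = f a / a * t" using True g_def by simp
      have n1: "\<bar>f t - D*t\<bar> \<le> \<eta>*D*t" using near that True by simp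
      have n2: "\<bar>f a - D*a\<bar> \<le> \<eta>*D*a" using near apos by simp
      define c where "c = f a / a"
      have ca: "c * a = f a" using apos c_def by simp
      have "\<bar>c - D\<bar> * a = \<bar>(c - D) * a\<bar>" using apos by (simp add: abs_mult)
      also have "(c - D) * a = f a - D*a" using ca by (simp add: algebra_simps)
      finally have "\<bar>c - D\<bar> * a \<le> \<eta>*D*a" using n2 by simp
      then have cD: "\<bar>c - D\<bar> \<le> \<eta>*D" using apos by (simp add: mult_le_cancel_right)
      have "\<bar>c*t - D*t\<bar> = \<bar>c - D\<bar> * t" using that by (simp add: abs_mult left_diff_distrib[symmetric])
      also have "\<dots> \<le> \<eta>*D*t" using cD that by (simp add: mult_right_mono)
      finally have "\<bar>c*t - D*t\<bar> \<le> \<eta>*D*t" .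
      moreover have "g t = c*t" using gt c_def by simp
      ultimately have E1: "\<bar>f t - g t\<bar> \<le> 2*\<eta>*D*t" using n1 by linarith
      have "eps * (1/2) \<le> eps*(1-\<eta>)" using eta eps_pos by (intro mult_left_mono) auto
      then have "2*\<eta> \<le> eps*(1-\<eta>)" using eta by linarith
      then have "2*\<eta>*(D*t) \<le> eps*(1-\<eta>)*(D*t)" using Dpos that by (intro mult_right_mono) auto
      then have E2: "2*\<eta>*D*t \<le> eps * ((1-\<eta>)*D*t)" by (simp add: mult.assoc)
      have fs: "(1-\<eta>)*D*t \<le> f t" using fpos_small[OF that True] .
      have E3: "eps * ((1-\<eta>)*D*t) \<le> eps * f t" using fs eps_pos by (intro mult_left_mono) auto
      have "(1-\<eta>)*D*t > 0" using eta Dpos that by simp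
      then show ?thesis using E1 E2 E3 fs by linarith
    next
      case False
      have fta: "f t \<ge> f a" using mf[of a t] False apos by simp
      have "\<bar>f t - g t\<bar> < e"
      proof (cases "t < b")
        case True
        define j where "j = nat \<lfloor>(t-a)/h\<rfloor>"
        have I: "j < N" "x j \<le> t" "t < x (Suc j)" using idx[of t] False True j_def by auto
        have gt: "g t = f (x j) + (t - x j)/h * (f (x (Suc j)) - f (x j))"
          using False True unfolding g_def j_def Let_def by simp
        have x0: "x j \<ge> a" using xin I by simp
        have f1: "f (x j) \<le> f t" using mf[of "x j" t] x0 apos I by simp
        have f2: "f t \<le> f (x (Suc j))" using mf[of t "x (Suc j)"] I False apos by simp
        have th: "0 \<le> (t - x j)/h" "(t - x j)/h \<le> 1"
          using I hpos by (auto simp: x_def field_simps)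
        have dpos': "f (x (Suc j)) - f (x j) \<ge> 0" using f1 f2 by simp
        have "(t - x j)/h * (f (x (Suc j)) - f (x j)) \<ge> 0" by (rule mult_nonneg_nonneg[OF th(1) dpos'])
        moreover have "(t - x j)/h * (f (x (Suc j)) - f (x j)) \<le> f (x (Suc j)) - f (x j)"
          by (rule mult_left_le_one_le[OF dpos' th])
        ultimately show ?thesis using gt f1 f2 xstep[OF I(1)] by linarith
      next
        case False2: False
        have "g t = f b" using False False2 g_def by simp
        moreover have "f b \<le> f t" using mf[of b t] False2 ab apos by simp
        moreover have "f t \<le> L" using fL that by simp
        ultimately show ?thesis using fb by linarith
      qed
      moreover have "eps * f a \<le> eps * f t" using fta eps_pos by (intro mult_left_mono) auto
      ultimately show ?thesis using fta e_def fa_pos by linarith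
    qed
    then show ?thesis by (simp add: pos_divide_le_eq)
  qed
  define xs where "xs = 0 # map x [0..<Suc N]"
  have len: "length xs = N + 2" using xs_def by simp
  have nth0: "xs ! 0 = 0" using xs_def by simp
  have nthS: "xs ! Suc k = x k" if "k \<le> N" for k using that xs_def
    by (simp del: upt_Suc add: nth_append)
  have sorted: "sorted_wrt (<) xs"
  proof (subst sorted_wrt_iff_nth_less, intro allI impI)
    fix i j assume ij: "i < j" "j < length xs"
    then obtain j' where j': "j = Suc j'" "j' \<le> N" using len by (cases j) auto
    show "xs ! i < xs ! j"
    proof (cases i)
      case 0
      then show ?thesis using nth0 nthS[OF j'(2)] j' xin[OF j'(2)] apos by simp
    next
      case (Suc i')
      then have "i' < j'" "i' \<le> N" using ij j' by auto
      then show ?thesis using Suc j' nthS hpos by (simp add: x_def)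
    qed
  qed
  have pieces: "\<forall>i<length xs. \<exists>c d. \<forall>t\<in>pl_piece xs i. g t = c*t+d"
  proof (intro allI impI)
    fix i assume i: "i < length xs"
    show "\<exists>c d. \<forall>t\<in>pl_piece xs i. g t = c*t+d"
    proof (cases i)
      case 0
      have P: "pl_piece xs i = {0..a}" using 0 len nth0 nthS[of 0] xs_def
        by (simp add: pl_piece_def x_def)
      show ?thesis by (rule exI[of _ "f a / a"], rule exI[of _ 0]) (auto simp: P g_def)
    next
      case (Suc k)
      show ?thesis
      proof (cases "k < N")
        case True
        have P: "pl_piece xs i = {x k .. x (Suc k)}" using Suc True len nthS[of k] nthS[of "Suc k"]
          by (simp add: pl_piece_def)
        define c where "c = (f (x (Suc k)) - f (x k))/h"
        have ch: "c * x (Suc k) + (f (x k) - c * x k) = f (x (Suc k))"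
          using hpos unfolding c_def x_def by (simp add: field_simps)
        have "\<forall>t\<in>pl_piece xs i. g t = c*t + (f (x k) - c * x k)"
        proof
          fix t assume "t \<in> pl_piece xs i"
          then have t: "x k \<le> t" "t \<le> x (Suc k)" using P by auto
          have xk: "x k \<ge> a" using xin True by simp
          show "g t = c*t + (f (x k) - c * x k)"
          proof (cases "t \<le> a")
            case True
            then have "t = a" "x k = a" using t xk by auto
            then show ?thesis using apos g_def by simp
          next
            case nle: False
            show ?thesis
            proof (cases "t < b")
              case False
              then have "t = b" using t xin[of "Suc k"] True by auto
              then have "x (Suc k) = b" using t xin[of "Suc k"] True by auto
              then show ?thesis using \<open>t = b\<close> ch g_def ab by simp
            next
              case tb: True
              define j where "j = nat \<lfloor>(t-a)/h\<rfloor>"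
              have I: "x j \<le> t" "t < x (Suc j)" using idx[of t] nle tb j_def by auto
              have gt: "g t = f (x j) + (t - x j)/h * (f (x (Suc j)) - f (x j))"
                using nle tb unfolding g_def j_def Let_def by simp
              have "real k * h < (real j + 1) * h" using I t unfolding x_def by (simp add: algebra_simps)
              then have "real k < real j + 1" using hpos by (simp add: mult_less_cancel_right_pos)
              then have "j \<ge> k" by linarith
              moreover have "real j * h \<le> (real k + 1) * h" using I t unfolding x_def by (simp add: algebra_simps)
              then have "real j \<le> real k + 1" using hpos by (simp add: mult_le_cancel_right_pos)
              then have "j \<le> Suc k" by linarith
              ultimately consider "j = k" | "j = Suc k" by linarith
              then show ?thesis
              proof cases
                case 1
                then have "g t = f (x k) + (t - x k)/h * (f (x (Suc k)) - f (x k))" using gt by simp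
                moreover have "(t - x k)/h * (f (x (Suc k)) - f (x k)) = c * (t - x k)"
                  unfolding c_def by simp
                ultimately have "g t = f (x k) + c * (t - x k)" by simp
                then show ?thesis by (simp add: algebra_simps)
              next
                case 2
                then have "t = x (Suc k)" using I t by simp
                then show ?thesis using gt 2 ch by simp
              qed
            qed
          qed
        qed
        then show ?thesis by blast
      next
        case False
        then have kN: "k = N" using i len Suc by simp
        have P: "pl_piece xs i = {b..}" using Suc kN len nthS[of N] xN
          by (simp add: pl_piece_def)
        show ?thesis by (rule exI[of _ 0], rule exI[of _ "f b"]) (use ab apos in \<open>auto simp: P g_def\<close>)
      qed
    qed
  qed
  have cover: "{0..} \<subseteq> (\<Union>i\<in>{..<length xs}. pl_piece xs i)"
  proof
    fix t :: real assume t: "t \<in> {0..}"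
    show "t \<in> (\<Union>i\<in>{..<length xs}. pl_piece xs i)"
    proof (cases "t \<le> a")
      case True
      then have "t \<in> pl_piece xs 0" using t len nth0 nthS[of 0] by (simp add: pl_piece_def x_def)
      then show ?thesis using len by force
    next
      case nle: False
      show ?thesis
      proof (cases "t < b")
        case True
        define j where "j = nat \<lfloor>(t-a)/h\<rfloor>"
        have I: "j < N" "x j \<le> t" "t < x (Suc j)" using idx[of t] nle True j_def by auto
        then have "t \<in> pl_piece xs (Suc j)" using len nthS[of j] nthS[of "Suc j"]
          by (simp add: pl_piece_def)
        then show ?thesis using len I by force
      next
        case False
        then have "t \<in> pl_piece xs (Suc N)" using len nthS[of N] xN by (simp add: pl_piece_def)
        then show ?thesis using len by force
      qed
    qed
  qed
  have "piecewise_linear_nonneg g"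
    unfolding piecewise_linear_nonneg_def
  proof (intro conjI exI[of _ xs])
    show "continuous_on {0..} g" using pl_cont[OF pieces cover] .
    show "xs \<noteq> []" "hd xs = 0" using xs_def by auto
  qed (use sorted pieces in auto)
  then show ?thesis using err by blast
qed

end
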